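(* Let $(M,f,g)$ be an $(m,n)$-hypermodule over a commutative Krasner $(m,n)$-hyperring $(R,f',g')$ with scalar identity $1$, let $Q$ be a proper subhypermodule of $M$ and put $S=M\setminus Q$. Then $Q$ is an $n$-ary classical prime subhypermodule of $M$ if and only if the following holds: for all hyperideals $I_1,\dots,I_{n-1}$ of $R$ and all subhypermodules $N_1,N_2$ of $M$, if $f(N_1,g(I_i,1^{(n-2)},N_2),0^{(m-2)})\cap S\neq\varnothing$ for every $1\le i\le n-1$, then $f(N_1,g(I_1^{n-1},N_2),0^{(m-2)})\cap S\neq\varnothing$.
   Context: A commutative Krasner $(m,n)$-hyperring with scalar identity $1$ is a triple $(R,f',g')$ where $(R,f')$ is a canonical $m$-ary hypergroup with zero $0$, $(R,g')$ is a commutative $n$-ary semigroup, $g'$ is distributive over $f'$, $0$ is a zero element for $g'$, and $g'(x,1^{(n-1)})=x$ for all $x$. Notation: $x_i^j$ denotes the sequence $x_i,\dots,x_j$ and $x^{(k)}$ denotes $x$ repeated $k$ times. A hyperideal $I$ of $R$ is a nonempty subset such that $(I,f')$ is an $m$-ary subhypergroup and $g'(x_1^{i-1},I,x_{i+1}^n)\subseteq I$ for all $x$'s and $i$. An $(m,n)$-hypermodule over $R$ is a triple $(M,f,g)$ where $(M,f)$ is a canonical $m$-ary hypergroup with zero $0$ and $g:R^{n-1}\times M\to P^*(M)$ satisfies: $g(r_1^{n-1},f(x_1^m))=f(g(r_1^{n-1},x_1),\dots,g(r_1^{n-1},x_m))$; $g(r_1^{i-1},f'(s_1^m),r_{i+1}^{n-1},x)=f(g(r_1^{i-1},s_1,r_{i+1}^{n-1},x),\dots,g(r_1^{i-1},s_m,r_{i+1}^{n-1},x))$;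 $g(r_1^{i-1},g'(r_i^{i+n-1}),r_{i+n}^{2n-2},x)=g(r_1^{n-1},g(r_n^{2n-2},x))$; and $g(r_1^{i-1},0,r_{i+1}^{n-1},x)=\{0\}$. Also $g(1^{(n-1)},a)=\{a\}$ and $g(r_1^{n-1},0)=\{0\}$. For subsets, $g(A_1,\dots,A_{n-1},X)=\bigcup\{g(r_1^{n-1},x): r_i\in A_i, x\in X\}$ and similarly $f$ applied to subsets is the union over elements. A subhypermodule of $M$ is a nonempty $N\subseteq M$ with $(N,f)$ an $m$-ary subhypergroup and $g(R^{(n-1)},N)\subseteq N$. A proper subhypermodule $Q$ of $M$ is $n$-ary classical prime if for all $r_1^{n-1}\in R$ and $a\in M$, $g(r_1^{n-1},a)\subseteq Q$ implies $g(r_i,1^{(n-2)},a)\subseteq Q$ for some $1\le i\le n-1$. *)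

theory Defs
  imports "HOL-Library.Multiset"
begin

text \<open>Carriers are the whole types. An m-ary hyperoperation on 'a is a map
  'a list \<Rightarrow> 'a set, meaningful on lists of length m. Sequences x_1^k are lists.\<close>

definition hlift :: "('a list \<Rightarrow> 'b set) \<Rightarrow> 'a set list \<Rightarrow> 'b set" where
  "hlift F As = \<Union>{F xs | xs. list_all2 (\<lambda>x A. x \<in> A) xs As}"

definition hyperop :: "nat \<Rightarrow> ('a list \<Rightarrow> 'a set) \<Rightarrow> bool" where
  "hyperop m f \<longleftrightarrow> (\<forall>xs. length xs = m \<longrightarrow> f xs \<noteq> {})"

definition hcomm :: "nat \<Rightarrow> ('a list \<Rightarrow> 'b) \<Rightarrow> bool" where
  "hcomm m f \<longleftrightarrow> (\<forall>xs ys. length xs = m \<longrightarrow> mset xs = mset ys \<longrightarrow> f xs = f ys)"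

definition hassoc_at :: "nat \<Rightarrow> ('a list \<Rightarrow> 'a set) \<Rightarrow> nat \<Rightarrow> 'a list \<Rightarrow> 'a set" where
  "hassoc_at m f i xs = (\<Union>y\<in>f (take m (drop i xs)). f (take i xs @ y # drop (i + m) xs))"

definition hsemihypergroup :: "nat \<Rightarrow> ('a list \<Rightarrow> 'a set) \<Rightarrow> bool" where
  "hsemihypergroup m f \<longleftrightarrow> hyperop m f \<and>
     (\<forall>xs. length xs = 2 * m - 1 \<longrightarrow> (\<forall>i<m. \<forall>j<m. hassoc_at m f i xs = hassoc_at m f j xs))"

definition hinv :: "nat \<Rightarrow> ('a list \<Rightarrow> 'a set) \<Rightarrow> 'a \<Rightarrow> 'a \<Rightarrow> 'a" where
  "hinv m f z x = (THE y. z \<in> f (x # y # replicate (m - 2) z))"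

definition canonical_hypergroup :: "nat \<Rightarrow> ('a list \<Rightarrow> 'a set) \<Rightarrow> 'a \<Rightarrow> bool" where
  "canonical_hypergroup m f z \<longleftrightarrow> 2 \<le> m \<and> hsemihypergroup m f \<and> hcomm m f \<and>
     (\<forall>x. f (x # replicate (m - 1) z) = {x}) \<and>
     (\<forall>e. (\<forall>x. f (x # replicate (m - 1) e) = {x}) \<longrightarrow> e = z) \<and>
     (\<forall>x. \<exists>!y. z \<in> f (x # y # replicate (m - 2) z)) \<and>
     (\<forall>xs x i. length xs = m \<longrightarrow> x \<in> f xs \<longrightarrow> i < m \<longrightarrow>
        xs ! i \<in> f (x # map (hinv m f z) (take i xs @ drop (Suc i) xs)))"

definition nary_semigroup :: "nat \<Rightarrow> ('a list \<Rightarrow> 'a) \<Rightarrow> bool" where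
  "nary_semigroup n g \<longleftrightarrow> (\<forall>xs. length xs = 2 * n - 1 \<longrightarrow> (\<forall>i<n. \<forall>j<n.
      g (take i xs @ g (take n (drop i xs)) # drop (i + n) xs) =
      g (take j xs @ g (take n (drop j xs)) # drop (j + n) xs)))"

definition krasner_hyperring ::
  "nat \<Rightarrow> nat \<Rightarrow> ('r list \<Rightarrow> 'r set) \<Rightarrow> ('r list \<Rightarrow> 'r) \<Rightarrow> 'r \<Rightarrow> 'r \<Rightarrow> bool" where
  "krasner_hyperring m n f' g' z one \<longleftrightarrow> 2 \<le> n \<and>
     canonical_hypergroup m f' z \<and> nary_semigroup n g' \<and> hcomm n g' \<and>
     (\<forall>xs ys i. length xs = n \<longrightarrow> length ys = m \<longrightarrow> i < n \<longrightarrow>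
        (\<lambda>y. g' (xs[i := y])) ` f' ys = f' (map (\<lambda>y. g' (xs[i := y])) ys)) \<and>
     (\<forall>xs i. length xs = n \<longrightarrow> i < n \<longrightarrow> g' (xs[i := z]) = z) \<and>
     (\<forall>x. g' (x # replicate (n - 1) one) = x)"

definition hypermodule ::
  "nat \<Rightarrow> nat \<Rightarrow> ('r list \<Rightarrow> 'r set) \<Rightarrow> ('r list \<Rightarrow> 'r) \<Rightarrow> 'r \<Rightarrow> 'r \<Rightarrow>
   ('m list \<Rightarrow> 'm set) \<Rightarrow> ('r list \<Rightarrow> 'm \<Rightarrow> 'm set) \<Rightarrow> 'm \<Rightarrow> bool" where
  "hypermodule m n f' g' zr one f g zm \<longleftrightarrow>
     krasner_hyperring m n f' g' zr one \<and> canonical_hypergroup m f zm \<and>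
     (\<forall>rs x. length rs = n - 1 \<longrightarrow> g rs x \<noteq> {}) \<and>
     (\<forall>rs xs. length rs = n - 1 \<longrightarrow> length xs = m \<longrightarrow>
        (\<Union>y\<in>f xs. g rs y) = hlift f (map (g rs) xs)) \<and>
     (\<forall>rs i ss x. length rs = n - 1 \<longrightarrow> i < n - 1 \<longrightarrow> length ss = m \<longrightarrow>
        (\<Union>s\<in>f' ss. g (rs[i := s]) x) = hlift f (map (\<lambda>s. g (rs[i := s]) x) ss)) \<and>
     (\<forall>rs i x. length rs = 2 * n - 2 \<longrightarrow> i < n - 1 \<longrightarrow>
        g (take i rs @ g' (take n (drop i rs)) # drop (i + n) rs) x =
        (\<Union>y\<in>g (drop (n - 1) rs) x. g (take (n - 1) rs) y)) \<and>
     (\<forall>rs i x. length rs = n - 1 \<longrightarrow> i < n - 1 \<longrightarrow> g (rs[i := zr]) x = {zm}) \<and>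
     (\<forall>a. g (replicate (n - 1) one) a = {a}) \<and>
     (\<forall>rs. length rs = n - 1 \<longrightarrow> g rs zm = {zm})"

definition gset :: "('r list \<Rightarrow> 'm \<Rightarrow> 'm set) \<Rightarrow> 'r set list \<Rightarrow> 'm set \<Rightarrow> 'm set" where
  "gset g As X = \<Union>{g rs x | rs x. list_all2 (\<lambda>r A. r \<in> A) rs As \<and> x \<in> X}"

definition sub_hypergroup :: "nat \<Rightarrow> ('a list \<Rightarrow> 'a set) \<Rightarrow> 'a set \<Rightarrow> bool" where
  "sub_hypergroup m f N \<longleftrightarrow> N \<noteq> {} \<and>
     (\<forall>xs. length xs = m \<longrightarrow> set xs \<subseteq> N \<longrightarrow> f xs \<subseteq> N) \<and>
     (\<forall>xs i. length xs = m - 1 \<longrightarrow> set xs \<subseteq> N \<longrightarrow> i < m \<longrightarrow>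
        (\<Union>y\<in>N. f (take i xs @ y # drop i xs)) = N)"

definition hyperideal :: "nat \<Rightarrow> nat \<Rightarrow> ('r list \<Rightarrow> 'r set) \<Rightarrow> ('r list \<Rightarrow> 'r) \<Rightarrow> 'r set \<Rightarrow> bool" where
  "hyperideal m n f' g' I \<longleftrightarrow> sub_hypergroup m f' I \<and>
     (\<forall>xs i. length xs = n \<longrightarrow> i < n \<longrightarrow> (\<lambda>y. g' (xs[i := y])) ` I \<subseteq> I)"

definition subhypermodule ::
  "nat \<Rightarrow> nat \<Rightarrow> ('m list \<Rightarrow> 'm set) \<Rightarrow> ('r list \<Rightarrow> 'm \<Rightarrow> 'm set) \<Rightarrow> 'm set \<Rightarrow> bool" where
  "subhypermodule m n f g N \<longleftrightarrow> sub_hypergroup m f N \<and>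
     gset g (replicate (n - 1) UNIV) N \<subseteq> N"

definition classical_prime ::
  "nat \<Rightarrow> nat \<Rightarrow> ('m list \<Rightarrow> 'm set) \<Rightarrow> ('r list \<Rightarrow> 'm \<Rightarrow> 'm set) \<Rightarrow> 'r \<Rightarrow> 'm set \<Rightarrow> bool" where
  "classical_prime m n f g one Q \<longleftrightarrow> subhypermodule m n f g Q \<and> Q \<noteq> UNIV \<and>
     (\<forall>rs a. length rs = n - 1 \<longrightarrow> g rs a \<subseteq> Q \<longrightarrow>
        (\<exists>i<n - 1. g (rs ! i # replicate (n - 2) one) a \<subseteq> Q))"

end

theory Submission
  imports Defs
begin



locale CHG = fixes m :: nat and F :: "'a list \<Rightarrow> 'a set" and z :: 'a
  assumes ch: "canonical_hypergroup m F z"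
begin

abbreviation "hv \<equiv> hinv m F z"

lemma m2: "2 \<le> m" using ch unfolding canonical_hypergroup_def by auto

lemma ne: "length xs = m \<Longrightarrow> F xs \<noteq> {}"
  using ch unfolding canonical_hypergroup_def hsemihypergroup_def hyperop_def by auto

lemma comm: "length xs = m \<Longrightarrow> mset xs = mset ys \<Longrightarrow> F xs = F ys"
  using ch unfolding canonical_hypergroup_def hcomm_def by auto

lemma unit: "F (x # replicate (m-1) z) = {x}"
  using ch unfolding canonical_hypergroup_def by auto

lemma unit2: "F (z # x # replicate (m-2) z) = {x}"
proof -
  have "F (z # x # replicate (m-2) z) = F (x # replicate (m-1) z)"
    apply (rule comm) using m2 apply simp
    using m2 by (cases m; cases "m - 1"; auto)
  thus ?thesis using unit by simp
qed

lemma ex1: "\<exists>!y. z \<in> F (x # y # replicate (m - 2) z)"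
  using ch unfolding canonical_hypergroup_def by auto

lemma hinv_in: "z \<in> F (x # hv x # replicate (m-2) z)"
  unfolding hinv_def by (rule theI'[OF ex1])

lemma hinv_eq: "z \<in> F (x # y # replicate (m-2) z) \<Longrightarrow> hv x = y"
  using ex1[of x] hinv_in[of x] by blast

lemma hinv_z: "hv z = z"
proof (rule hinv_eq)
  have "z # replicate (m-2) z = replicate (m-1) z" using m2 by (cases m; cases "m - 1"; auto)
  thus "z \<in> F (z # z # replicate (m-2) z)" using unit[of z] by simp
qed

lemma hinv_hinv: "hv (hv x) = x"
proof (rule hinv_eq)
  have "F (hv x # x # replicate (m-2) z) = F (x # hv x # replicate (m-2) z)"
    apply (rule comm) using m2 by auto
  thus "z \<in> F (hv x # x # replicate (m-2) z)" using hinv_in by simp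
qed

lemma revers: "length xs = m \<Longrightarrow> x \<in> F xs \<Longrightarrow> i < m \<Longrightarrow>
   xs ! i \<in> F (x # map hv (take i xs @ drop (Suc i) xs))"
  using ch unfolding canonical_hypergroup_def by blast

definition cl :: "'a set \<Rightarrow> bool" where
  "cl N \<longleftrightarrow> z \<in> N \<and> (\<forall>xs. length xs = m \<longrightarrow> set xs \<subseteq> N \<longrightarrow> F xs \<subseteq> N) \<and> (\<forall>x\<in>N. hv x \<in> N)"

lemma cl_sub: assumes "cl N" shows "sub_hypergroup m F N"
  unfolding sub_hypergroup_def
proof (intro conjI allI impI)
  show "N \<noteq> {}" using assms unfolding cl_def by auto
  show "\<And>xs. length xs = m \<Longrightarrow> set xs \<subseteq> N \<Longrightarrow> F xs \<subseteq> N" using assms unfolding cl_def by auto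
  fix xs i assume l: "length xs = m - 1" and s: "set xs \<subseteq> N" and i: "i < m"
  show "(\<Union>y\<in>N. F (take i xs @ y # drop i xs)) = N"
  proof
    show "(\<Union>y\<in>N. F (take i xs @ y # drop i xs)) \<subseteq> N"
    proof (safe)
      fix y w assume "y \<in> N" "w \<in> F (take i xs @ y # drop i xs)"
      moreover have "set (take i xs @ y # drop i xs) \<subseteq> N" using s \<open>y \<in> N\<close>
        by (auto dest: in_set_takeD in_set_dropD)
      moreover have "length (take i xs @ y # drop i xs) = m" using l i m2 by auto
      ultimately show "w \<in> N" using assms unfolding cl_def by blast
    qed
    show "N \<subseteq> (\<Union>y\<in>N. F (take i xs @ y # drop i xs))"
    proof
      fix w assume w: "w \<in> N"
      have l2: "length (w # map hv xs) = m" using l m2 by auto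
      then obtain y where y: "y \<in> F (w # map hv xs)" using ne by blast
      have "set (w # map hv xs) \<subseteq> N" using s w assms unfolding cl_def by auto
      hence yN: "y \<in> N" using y l2 assms unfolding cl_def by blast
      have "(w # map hv xs) ! 0 \<in> F (y # map hv (take 0 (w # map hv xs) @ drop (Suc 0) (w # map hv xs)))"
        by (rule revers[OF l2 y]) (use m2 in auto)
      hence "w \<in> F (y # xs)" by (simp add: hinv_hinv comp_def)
      moreover have "F (y # xs) = F (take i xs @ y # drop i xs)"
        apply (rule comm) using l m2 apply simp
        by (metis append_take_drop_id mset.simps(2) mset_append union_mset_add_mset_right add_mset_add_single)
      ultimately show "w \<in> (\<Union>y\<in>N. F (take i xs @ y # drop i xs))" using yN by blast
    qed
  qed
qed

lemma sub_cl: assumes "sub_hypergroup m F N" "z \<in> N" shows "cl N"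
  unfolding cl_def
proof (intro conjI ballI allI impI)
  show "z \<in> N" by fact
  show "\<And>xs. length xs = m \<Longrightarrow> set xs \<subseteq> N \<Longrightarrow> F xs \<subseteq> N" using assms unfolding sub_hypergroup_def by auto
  fix x assume x: "x \<in> N"
  have l: "length (x # replicate (m-2) z) = m - 1" using m2 by auto
  have s: "set (x # replicate (m-2) z) \<subseteq> N" using assms x by auto
  have "(\<Union>y\<in>N. F (take 1 (x # replicate (m-2) z) @ y # drop 1 (x # replicate (m-2) z))) = N"
    using assms(1) l s m2 unfolding sub_hypergroup_def by (metis One_nat_def Suc_le_eq numeral_2_eq_2)
  hence "(\<Union>y\<in>N. F (x # y # replicate (m-2) z)) = N" by simp
  with assms(2) obtain y where "y \<in> N" "z \<in> F (x # y # replicate (m-2) z)" by blast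
  thus "hv x \<in> N" using hinv_eq by simp
qed


lemma union: assumes "cl N" "cl A" "cl B" "A \<union> B = N" shows "A = N \<or> B = N"
proof (rule ccontr)
  assume "\<not> (A = N \<or> B = N)"
  then obtain a b where a: "a \<in> A" "a \<notin> B" and b: "b \<in> B" "b \<notin> A" using assms(4) by blast
  define zs where "zs = replicate (m-2) z"
  have l: "length (a # b # zs) = m" using m2 unfolding zs_def by auto
  then obtain c where c: "c \<in> F (a # b # zs)" using ne by blast
  have "set (a # b # zs) \<subseteq> N" using a b assms unfolding zs_def cl_def by auto
  hence "c \<in> N" using c l assms(1) unfolding cl_def by blast
  hence "c \<in> A \<or> c \<in> B" using assms(4) by blast
  thus False
  proof
    assume cA: "c \<in> A"
    have "(a # b # zs) ! 1 \<in> F (c # map hv (take 1 (a # b # zs) @ drop (Suc 1) (a # b # zs)))"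
      by (rule revers[OF l c]) (use m2 in auto)
    hence "b \<in> F (c # hv a # zs)" by (simp add: zs_def hinv_z)
    moreover have "set (c # hv a # zs) \<subseteq> A" using cA a assms(2) unfolding cl_def zs_def by auto
    moreover have "length (c # hv a # zs) = m" using l by simp
    ultimately show False using b assms(2) unfolding cl_def by blast
  next
    assume cB: "c \<in> B"
    have "(a # b # zs) ! 0 \<in> F (c # map hv (take 0 (a # b # zs) @ drop (Suc 0) (a # b # zs)))"
      by (rule revers[OF l c]) (use m2 in auto)
    hence "a \<in> F (c # hv b # zs)" by (simp add: zs_def hinv_z)
    moreover have "set (c # hv b # zs) \<subseteq> B" using cB b assms(3) unfolding cl_def zs_def by auto
    moreover have "length (c # hv b # zs) = m" using l by simp
    ultimately show False using a assms(3) unfolding cl_def by blast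
  qed
qed

lemma hlift_sub: assumes "length As = m" "\<forall>A\<in>set As. A \<subseteq> Q"
  "\<forall>xs. length xs = m \<longrightarrow> set xs \<subseteq> Q \<longrightarrow> F xs \<subseteq> Q"
  shows "hlift F As \<subseteq> Q"
proof
  fix w assume "w \<in> hlift F As"
  then obtain xs where xs: "list_all2 (\<lambda>x A. x \<in> A) xs As" "w \<in> F xs" unfolding hlift_def by blast
  have "length xs = m" using xs(1) assms(1) by (simp add: list_all2_lengthD)
  moreover have "set xs \<subseteq> Q"
  proof
    fix x assume "x \<in> set xs"
    then obtain i where "i < length xs" "x = xs ! i" by (metis in_set_conv_nth)
    thus "x \<in> Q" using xs(1) assms(2) by (metis list_all2_conv_all_nth nth_mem subsetD)
  qed
  ultimately show "w \<in> Q" using xs(2) assms(3) by blast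
qed

end

lemma la2_rep: "list_all2 (\<lambda>x A. x \<in> A) ys (replicate k {z}) \<longleftrightarrow> ys = replicate k z"
  by (induction k arbitrary: ys) (auto simp: list_all2_Cons2)

lemma hlift3: "w \<in> hlift F ([A, B] @ replicate k {z}) \<longleftrightarrow> (\<exists>a\<in>A. \<exists>b\<in>B. w \<in> F (a # b # replicate k z))"
  unfolding hlift_def by (auto simp: list_all2_Cons2 la2_rep) blast

lemma gset1: "w \<in> gset g (I # replicate k {one}) X \<longleftrightarrow> (\<exists>t\<in>I. \<exists>x\<in>X. w \<in> g (t # replicate k one) x)"
  unfolding gset_def by (auto simp: list_all2_Cons2 la2_rep)

lemma gset_iff: "w \<in> gset g As X \<longleftrightarrow> (\<exists>rs x. list_all2 (\<lambda>r A. r \<in> A) rs As \<and> x \<in> X \<and> w \<in> g rs x)"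
  unfolding gset_def by auto




locale HM = fixes m n :: nat and f' :: "'r list \<Rightarrow> 'r set" and g' :: "'r list \<Rightarrow> 'r"
  and zr one :: 'r and f :: "'m list \<Rightarrow> 'm set" and g :: "'r list \<Rightarrow> 'm \<Rightarrow> 'm set" and zm :: 'm
  assumes hm: "hypermodule m n f' g' zr one f g zm"
begin

lemmas hmc = hm[unfolded hypermodule_def]
lemmas kr = hmc[THEN conjunct1]
lemmas krc = kr[unfolded krasner_hyperring_def]

sublocale R: CHG m f' zr using krc[THEN conjunct2, THEN conjunct1] by unfold_locales
sublocale M: CHG m f zm using hmc[THEN conjunct2, THEN conjunct1] by unfold_locales

lemma n2: "2 \<le> n" using krc[THEN conjunct1] .

lemma gcomm: "length xs = n \<Longrightarrow> mset xs = mset ys \<Longrightarrow> g' xs = g' ys"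
  using krc[THEN conjunct2, THEN conjunct2, THEN conjunct2, THEN conjunct1] unfolding hcomm_def by blast

lemma gassoc: "length xs = 2 * n - 1 \<Longrightarrow> i < n \<Longrightarrow> j < n \<Longrightarrow>
      g' (take i xs @ g' (take n (drop i xs)) # drop (i + n) xs) =
      g' (take j xs @ g' (take n (drop j xs)) # drop (j + n) xs)"
  using krc[THEN conjunct2, THEN conjunct2, THEN conjunct1] unfolding nary_semigroup_def by blast

lemma gdistr: "length xs = n \<Longrightarrow> length ys = m \<Longrightarrow> i < n \<Longrightarrow>
        (\<lambda>y. g' (xs[i := y])) ` f' ys = f' (map (\<lambda>y. g' (xs[i := y])) ys)"
  using krc[THEN conjunct2, THEN conjunct2, THEN conjunct2, THEN conjunct2, THEN conjunct1] by blast

lemma gzero: "length xs = n \<Longrightarrow> i < n \<Longrightarrow> g' (xs[i := zr]) = zr"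
  using krc[THEN conjunct2, THEN conjunct2, THEN conjunct2, THEN conjunct2, THEN conjunct2, THEN conjunct1] by blast

lemma gone: "g' (x # replicate (n - 1) one) = x"
  using krc[THEN conjunct2, THEN conjunct2, THEN conjunct2, THEN conjunct2, THEN conjunct2, THEN conjunct2] by blast

lemma act_ne: "length rs = n - 1 \<Longrightarrow> g rs x \<noteq> {}"
  using hmc[THEN conjunct2, THEN conjunct2, THEN conjunct1] by blast

lemma act_fdistr: "length rs = n - 1 \<Longrightarrow> length xs = m \<Longrightarrow>
        (\<Union>y\<in>f xs. g rs y) = hlift f (map (g rs) xs)"
  using hmc[THEN conjunct2, THEN conjunct2, THEN conjunct2, THEN conjunct1] by blast

lemma act_sdistr: "length rs = n - 1 \<Longrightarrow> i < n - 1 \<Longrightarrow> length ss = m \<Longrightarrow>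
        (\<Union>s\<in>f' ss. g (rs[i := s]) x) = hlift f (map (\<lambda>s. g (rs[i := s]) x) ss)"
  using hmc[THEN conjunct2, THEN conjunct2, THEN conjunct2, THEN conjunct2, THEN conjunct1] by blast

lemma act_assoc: "length rs = 2 * n - 2 \<Longrightarrow> i < n - 1 \<Longrightarrow>
        g (take i rs @ g' (take n (drop i rs)) # drop (i + n) rs) x =
        (\<Union>y\<in>g (drop (n - 1) rs) x. g (take (n - 1) rs) y)"
  using hmc[THEN conjunct2, THEN conjunct2, THEN conjunct2, THEN conjunct2, THEN conjunct2, THEN conjunct1] by blast

lemma act_zero: "length rs = n - 1 \<Longrightarrow> i < n - 1 \<Longrightarrow> g (rs[i := zr]) x = {zm}"
  using hmc[THEN conjunct2, THEN conjunct2, THEN conjunct2, THEN conjunct2, THEN conjunct2, THEN conjunct2, THEN conjunct1] by blast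

lemma act_ones: "g (replicate (n - 1) one) a = {a}"
  using hmc[THEN conjunct2, THEN conjunct2, THEN conjunct2, THEN conjunct2, THEN conjunct2, THEN conjunct2, THEN conjunct2, THEN conjunct1] by blast

lemma act_zm: "length rs = n - 1 \<Longrightarrow> g rs zm = {zm}"
  using hmc[THEN conjunct2, THEN conjunct2, THEN conjunct2, THEN conjunct2, THEN conjunct2, THEN conjunct2, THEN conjunct2, THEN conjunct2] by blast

definition mul where "mul a b = g' (a # b # replicate (n-2) one)"
definition act where "act r x = g (r # replicate (n-2) one) x"
definition prod where "prod xs = g' (xs @ replicate (n - length xs) one)"

lemma nSS: obtains k where "n = Suc (Suc k)" using n2 by (metis add_2_eq_Suc le_Suc_ex)

lemma mul_comm: "mul a b = mul b a"
  unfolding mul_def by (rule gcomm) (use n2 in auto)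

lemma mul_one: "mul one x = x"
proof -
  obtain k where k: "n = Suc (Suc k)" by (rule nSS)
  have "mul one x = g' (x # replicate (n - 1) one)"
    unfolding mul_def by (rule gcomm) (auto simp: k)
  thus ?thesis using gone by simp
qed

lemma mul_zero: "mul x zr = zr"
proof -
  have "g' ((x # one # replicate (n-2) one)[1 := zr]) = zr" by (rule gzero) (use n2 in auto)
  thus ?thesis unfolding mul_def by simp
qed

lemma mul_assoc: "mul (mul a b) c = mul a (mul b c)"
proof -
  obtain k where k: "n = Suc (Suc k)" by (rule nSS)
  define xs where "xs = a # b # replicate k one @ c # replicate k one"
  have "g' (take 0 xs @ g' (take n (drop 0 xs)) # drop (0 + n) xs) =
      g' (take 1 xs @ g' (take n (drop 1 xs)) # drop (1 + n) xs)"
    by (rule gassoc) (auto simp: xs_def k)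
  hence e: "g' (g' (a # b # replicate k one) # c # replicate k one) = g' (a # g' (b # replicate k one @ [c]) # replicate k one)"
    by (simp add: xs_def k)
  have "g' (b # replicate k one @ [c]) = mul b c" unfolding mul_def by (rule gcomm) (auto simp: k)
  thus ?thesis using e unfolding mul_def by (simp add: k)
qed

lemma g_cons: assumes "length rest = n - 1" shows "g' (a # rest) = mul a (g' (one # rest))"
proof -
  obtain k where k: "n = Suc (Suc k)" by (rule nSS)
  define xs where "xs = (a # replicate k one) @ (one # rest)"
  have "g' (take 0 xs @ g' (take n (drop 0 xs)) # drop (0 + n) xs) =
      g' (take (n-1) xs @ g' (take n (drop (n-1) xs)) # drop ((n-1) + n) xs)"
    by (rule gassoc) (use assms in \<open>auto simp: xs_def k\<close>)
  hence e: "g' (g' (a # replicate (Suc k) one) # rest) = g' (a # replicate k one @ [g' (one # rest)])"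
    using assms by (simp add: xs_def k replicate_append_same)
  have "g' (a # replicate (Suc k) one) = a" using gone by (simp add: k)
  moreover have "g' (a # replicate k one @ [g' (one # rest)]) = mul a (g' (one # rest))"
    unfolding mul_def by (rule gcomm) (auto simp: k)
  ultimately show ?thesis using e by simp
qed

lemma prod_nil: "prod [] = one"
proof -
  obtain k where k: "n = Suc (Suc k)" by (rule nSS)
  show ?thesis unfolding prod_def using gone by (simp add: k)
qed

lemma prod_cons: assumes "length xs < n" shows "prod (a # xs) = mul a (prod xs)"
proof -
  have "prod (a # xs) = g' (a # (xs @ replicate (n - Suc (length xs)) one))" unfolding prod_def by simp
  also have "\<dots> = mul a (g' (one # (xs @ replicate (n - Suc (length xs)) one)))"
    by (rule g_cons) (use assms in auto)
  also have "g' (one # (xs @ replicate (n - Suc (length xs)) one)) = prod xs"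
    unfolding prod_def apply (rule gcomm) using assms apply simp
  proof -
    have "n - length xs = Suc (n - Suc (length xs))" using assms by simp
    thus "mset (one # xs @ replicate (n - Suc (length xs)) one) = mset (xs @ replicate (n - length xs) one)" by simp
  qed
  finally show ?thesis .
qed

lemma prod_perm: assumes "mset xs = mset ys" "length xs \<le> n" shows "prod xs = prod ys"
proof -
  have l: "length ys = length xs" using assms(1) by (metis size_mset)
  show ?thesis unfolding prod_def l by (rule gcomm) (use assms in auto)
qed

lemma prod_ones: assumes "length xs + k \<le> n" shows "prod (xs @ replicate k one) = prod xs"
  unfolding prod_def using assms by (simp add: replicate_add[symmetric])

lemma act_g: assumes "length rs = n - 1" shows "g rs x = act (prod rs) x"
proof -
  obtain k where k: "n = Suc (Suc k)" by (rule nSS)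
  define L where "L = rs @ replicate (n - 1) one"
  have "g (take 0 L @ g' (take n (drop 0 L)) # drop (0 + n) L) x =
        (\<Union>y\<in>g (drop (n - 1) L) x. g (take (n - 1) L) y)"
    by (rule act_assoc) (use assms in \<open>auto simp: L_def k\<close>)
  moreover have "take n L = rs @ [one]" "drop n L = replicate k one" "drop (n-1) L = replicate (n-1) one"
    "take (n-1) L = rs" using assms by (auto simp: L_def k)
  ultimately have "g (g' (rs @ [one]) # replicate k one) x = g rs x" using act_ones by simp
  moreover have "prod rs = g' (rs @ [one])" unfolding prod_def using assms by (simp add: k)
  ultimately show ?thesis unfolding act_def by (simp add: k)
qed

lemma act_comp: "act (mul a b) x = (\<Union>y\<in>act b x. act a y)"
proof -
  obtain k where k: "n = Suc (Suc k)" by (rule nSS)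
  define L where "L = (a # replicate k one) @ (b # replicate k one)"
  have "g (take 0 L @ g' (take n (drop 0 L)) # drop (0 + n) L) x =
        (\<Union>y\<in>g (drop (n - 1) L) x. g (take (n - 1) L) y)"
    by (rule act_assoc) (auto simp: L_def k)
  moreover have "take n L = a # replicate k one @ [b]" "drop n L = replicate k one" "drop (n-1) L = b # replicate k one"
    "take (n-1) L = a # replicate k one" by (auto simp: L_def k)
  moreover have "g' (a # replicate k one @ [b]) = mul a b" unfolding mul_def by (rule gcomm) (auto simp: k)
  ultimately show ?thesis unfolding act_def by (simp add: k)
qed

lemma act_one: "act one x = {x}"
proof -
  obtain k where k: "n = Suc (Suc k)" by (rule nSS)
  show ?thesis unfolding act_def using act_ones[of x] by (simp add: k)
qed

lemma act_zmz: "act r zm = {zm}" unfolding act_def by (rule act_zm) (use n2 in auto)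

lemma act_zr: "act zr x = {zm}"
proof -
  have "g ((one # replicate (n-2) one)[0 := zr]) x = {zm}" by (rule act_zero) (use n2 in auto)
  thus ?thesis unfolding act_def by simp
qed

lemma act_distr: "length xs = m \<Longrightarrow> (\<Union>y\<in>f xs. act r y) = hlift f (map (act r) xs)"
  unfolding act_def by (rule act_fdistr) (use n2 in auto)

lemma neg: "M.hv x \<in> act (R.hv one) x"
proof -
  obtain k where k: "m = Suc (Suc k)" using R.m2 by (metis add_2_eq_Suc le_Suc_ex)
  define ss where "ss = one # R.hv one # replicate k zr"
  have "(\<Union>s\<in>f' ss. g ((replicate (n-1) one)[0 := s]) x) = hlift f (map (\<lambda>s. g ((replicate (n-1) one)[0 := s]) x) ss)"
    by (rule act_sdistr) (use n2 in \<open>auto simp: ss_def k\<close>)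
  moreover have "\<And>s. (replicate (n-1) one)[0 := s] = s # replicate (n-2) one"
    using n2 by (cases n; cases "n - 1"; auto)
  ultimately have e: "(\<Union>s\<in>f' ss. act s x) = hlift f (map (\<lambda>s. act s x) ss)" unfolding act_def by simp
  have "zr \<in> f' ss" using R.hinv_in[of one] by (simp add: ss_def k)
  hence "zm \<in> hlift f (map (\<lambda>s. act s x) ss)" using e act_zr by blast
  hence "zm \<in> hlift f ([{x}, act (R.hv one) x] @ replicate k {zm})"
    by (simp add: ss_def act_one act_zr map_replicate_const)
  then obtain y where "y \<in> act (R.hv one) x" "zm \<in> f (x # y # replicate k zm)"
    unfolding hlift3 by auto
  moreover have "M.hv x = y" by (rule M.hinv_eq) (use calculation in \<open>simp add: k\<close>)
  ultimately show ?thesis by simp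
qed

end



context HM begin

lemma subm_sub: "subhypermodule m n f g N \<Longrightarrow> sub_hypergroup m f N"
  unfolding subhypermodule_def by blast

lemma subm_g: assumes "subhypermodule m n f g N" "x \<in> N" "length rs = n - 1" shows "g rs x \<subseteq> N"
proof -
  have "list_all2 (\<lambda>r A. r \<in> A) rs (replicate (n - 1) UNIV)" using assms(3)
    by (simp add: list_all2_conv_all_nth)
  hence "g rs x \<subseteq> gset g (replicate (n - 1) UNIV) N" using assms(2) unfolding gset_def by blast
  thus ?thesis using assms(1) unfolding subhypermodule_def by blast
qed

lemma subm_act: assumes "subhypermodule m n f g N" "x \<in> N" shows "act r x \<subseteq> N"
  unfolding act_def by (rule subm_g[OF assms]) (use n2 in auto)

lemma subm_zm: assumes "subhypermodule m n f g N" shows "zm \<in> N"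
proof -
  obtain x where "x \<in> N" using subm_sub[OF assms] unfolding sub_hypergroup_def by blast
  hence "act zr x \<subseteq> N" by (rule subm_act[OF assms])
  thus ?thesis using act_zr by simp
qed

lemma subm_cl: "subhypermodule m n f g N \<Longrightarrow> M.cl N"
  using M.sub_cl subm_sub subm_zm by blast

lemma subm_f: "subhypermodule m n f g N \<Longrightarrow> length xs = m \<Longrightarrow> set xs \<subseteq> N \<Longrightarrow> f xs \<subseteq> N"
  using subm_sub unfolding sub_hypergroup_def by blast

definition col where "col Q N CS = {x\<in>N. \<forall>c\<in>CS. act c x \<subseteq> Q}"

lemma col_cl: assumes Q: "subhypermodule m n f g Q" and N: "M.cl N" shows "M.cl (col Q N CS)"
  unfolding M.cl_def
proof (intro conjI allI impI ballI)
  show "zm \<in> col Q N CS" using N subm_zm[OF Q] act_zmz unfolding col_def M.cl_def by auto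
next
  fix xs assume l: "length xs = m" and s: "set xs \<subseteq> col Q N CS"
  show "f xs \<subseteq> col Q N CS"
  proof
    fix w assume w: "w \<in> f xs"
    have "w \<in> N" using N l s w unfolding M.cl_def col_def by blast
    moreover have "act c w \<subseteq> Q" if c: "c \<in> CS" for c
    proof -
      have "act c w \<subseteq> (\<Union>y\<in>f xs. act c y)" using w by blast
      also have "\<dots> = hlift f (map (act c) xs)" by (rule act_distr[OF l])
      also have "\<dots> \<subseteq> Q"
        by (rule M.hlift_sub) (use l s c subm_f[OF Q] in \<open>auto simp: col_def\<close>)
      finally show ?thesis .
    qed
    ultimately show "w \<in> col Q N CS" unfolding col_def by blast
  qed
next
  fix x assume x: "x \<in> col Q N CS"
  have "M.hv x \<in> N" using x N unfolding col_def M.cl_def by blast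
  moreover have "act c (M.hv x) \<subseteq> Q" if c: "c \<in> CS" for c
  proof -
    have "act c (M.hv x) \<subseteq> (\<Union>y\<in>act (R.hv one) x. act c y)" using neg by blast
    also have "\<dots> = act (mul c (R.hv one)) x" by (simp add: act_comp)
    also have "\<dots> = (\<Union>y\<in>act c x. act (R.hv one) y)" by (metis act_comp mul_comm)
    also have "\<dots> \<subseteq> Q" using x c subm_act[OF Q] unfolding col_def by blast
    finally show ?thesis .
  qed
  ultimately show "M.hv x \<in> col Q N CS" unfolding col_def by blast
qed

lemma act_in: assumes Q: "subhypermodule m n f g Q" and a: "a \<in> set ts" and l: "length ts \<le> n"
  and ax: "act a x \<subseteq> Q" shows "act (prod ts) x \<subseteq> Q"
proof -
  have ms: "mset ts = mset (a # remove1 a ts)" using a by simp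
  have lr: "length (remove1 a ts) < n" using a l by (simp add: length_remove1)
       (metis One_nat_def Suc_pred diff_less length_pos_if_in_set less_le_trans zero_less_one le_less_Suc_eq not_less_eq)
  have "prod ts = prod (a # remove1 a ts)" by (rule prod_perm[OF ms l])
  also have "\<dots> = mul (prod (remove1 a ts)) a" using prod_cons[OF lr] mul_comm by simp
  finally have "act (prod ts) x = (\<Union>y\<in>act a x. act (prod (remove1 a ts)) y)" by (simp add: act_comp)
  thus ?thesis using ax subm_act[OF Q] by blast
qed

end



context HM begin

lemma core:
  assumes cp: "classical_prime m n f g one Q" and N2: "subhypermodule m n f g N2"
    and lI: "length Is = n - 1" and G: "gset g Is N2 \<subseteq> Q"
  shows "\<exists>i<n - 1. gset g (Is ! i # replicate (n - 2) {one}) N2 \<subseteq> Q"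
proof -
  have Q: "subhypermodule m n f g Q" using cp unfolding classical_prime_def by blast
  have cpr: "\<And>rs a. length rs = n - 1 \<Longrightarrow> g rs a \<subseteq> Q \<Longrightarrow> \<exists>i<n - 1. act (rs ! i) a \<subseteq> Q"
    using cp unfolding classical_prime_def act_def by blast
  have clN: "M.cl N2" by (rule subm_cl[OF N2])
  define A where "A i = col Q N2 (Is ! i)" for i
  define B where "B k = col Q N2 (prod ` {ts. list_all2 (\<lambda>r A. r \<in> A) ts (take k Is)})" for k
  have clA: "M.cl (A i)" for i unfolding A_def by (rule col_cl[OF Q clN])
  have clB: "M.cl (B k)" for k unfolding B_def by (rule col_cl[OF Q clN])
  have AN: "A i \<subseteq> N2" for i unfolding A_def col_def by blast
  have BN: "B k \<subseteq> N2" for k unfolding B_def col_def by blast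
  have Bfull: "B (n - 1) = N2"
  proof
    show "N2 \<subseteq> B (n - 1)"
    proof
      fix x assume x: "x \<in> N2"
      have "act (prod ts) x \<subseteq> Q" if ts: "list_all2 (\<lambda>r A. r \<in> A) ts Is" for ts
      proof -
        have lt: "length ts = n - 1" using ts lI by (simp add: list_all2_lengthD)
        have "g ts x \<subseteq> gset g Is N2" using ts x unfolding gset_def by blast
        thus ?thesis using G act_g[OF lt] by simp
      qed
      thus "x \<in> B (n - 1)" using x lI unfolding B_def col_def by auto
    qed
  qed (rule BN)
  have step: "B (Suc k) \<subseteq> B k \<union> A k" if k: "k < n - 1" for k
  proof
    fix x assume xB: "x \<in> B (Suc k)"
    hence xN: "x \<in> N2" using BN by blast
    show "x \<in> B k \<union> A k"
    proof (cases "x \<in> A k")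
      case False
      then obtain t where t: "t \<in> Is ! k" "\<not> act t x \<subseteq> Q" using xN unfolding A_def col_def by blast
      have "act (prod ts) x \<subseteq> Q" if ts: "list_all2 (\<lambda>r A. r \<in> A) ts (take k Is)" for ts
      proof -
        have lts: "length ts = k" using ts k lI by (simp add: list_all2_lengthD)
        define L where "L = ts @ [t] @ replicate (n - 2 - k) one"
        have lL: "length L = n - 1" using lts k unfolding L_def by simp
        have tk: "take (Suc k) Is = take k Is @ [Is ! k]" using k lI by (simp add: take_Suc_conv_app_nth)
        have "list_all2 (\<lambda>r A. r \<in> A) (ts @ [t]) (take (Suc k) Is)"
          unfolding tk by (rule list_all2_appendI) (use ts t in auto)
        hence "act (prod (ts @ [t])) x \<subseteq> Q" using xB unfolding B_def col_def by blast
        moreover have "prod L = prod (ts @ [t])" unfolding L_def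
          using prod_ones[of "ts @ [t]" "n - 2 - k"] lts k by simp
        ultimately have "g L x \<subseteq> Q" using act_g[OF lL] by simp
        then obtain j where j: "j < n - 1" "act (L ! j) x \<subseteq> Q" using cpr[OF lL] by blast
        have "L ! j \<in> set L" using j lL by simp
        hence "L ! j \<in> set ts \<or> L ! j = t \<or> L ! j = one" unfolding L_def by (auto simp: in_set_replicate)
        thus ?thesis
        proof (elim disjE)
          assume "L ! j \<in> set ts" thus ?thesis using act_in[OF Q _ _ j(2)] lts k by simp
        next
          assume "L ! j = t" thus ?thesis using j t by simp
        next
          assume "L ! j = one" hence "x \<in> Q" using j act_one by simp
          thus ?thesis using subm_act[OF Q] by blast
        qed
      qed
      thus ?thesis using xN unfolding B_def col_def by blast
    qed simp
  qed
  have B0: "B 0 = N2 \<Longrightarrow> A 0 = N2"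
  proof
    assume b: "B 0 = N2"
    show "N2 \<subseteq> A 0"
    proof
      fix x assume x: "x \<in> N2"
      hence "act (prod []) x \<subseteq> Q" using b unfolding B_def col_def by auto
      hence "x \<in> Q" using prod_nil act_one by simp
      thus "x \<in> A 0" using x subm_act[OF Q] unfolding A_def col_def by blast
    qed
  qed (rule AN)
  have ind: "k \<le> n - 1 \<Longrightarrow> B k = N2 \<Longrightarrow> \<exists>i<n - 1. A i = N2" for k
  proof (induction k)
    case 0
    have "A 0 = N2" using B0 0 by blast
    moreover have "0 < n - 1" using n2 by simp
    ultimately show ?case by blast
  next
    case (Suc k)
    have k: "k < n - 1" using Suc.prems(1) by simp
    have "B (Suc k) = N2" using Suc.prems(2) .
    hence "N2 \<subseteq> B k \<union> A k" using step[OF k] by simp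
    hence "B k \<union> A k = N2" using AN[of k] BN[of k] by blast
    hence "B k = N2 \<or> A k = N2" using M.union[OF clN clB clA] by blast
    thus ?case
    proof
      assume "B k = N2" thus ?case using Suc.IH k by simp
    next
      assume "A k = N2" thus ?case using k by blast
    qed
  qed
  obtain i where i: "i < n - 1" "A i = N2" using ind[OF _ Bfull] by blast
  have "gset g (Is ! i # replicate (n - 2) {one}) N2 \<subseteq> Q"
  proof
    fix w assume "w \<in> gset g (Is ! i # replicate (n - 2) {one}) N2"
    then obtain t x where "t \<in> Is ! i" "x \<in> N2" "w \<in> act t x" unfolding gset1 act_def by blast
    thus "w \<in> Q" using i unfolding A_def col_def by blast
  qed
  thus ?thesis using i by blast
qed

end



context HM begin

lemma forward:
  assumes cp: "classical_prime m n f g one Q" and lI: "length Is = n - 1"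
    and hI: "\<forall>I\<in>set Is. hyperideal m n f' g' I"
    and N1: "subhypermodule m n f g N1" and N2: "subhypermodule m n f g N2"
    and H: "\<forall>i<n - 1. hlift f ([N1, gset g (Is ! i # replicate (n - 2) {one}) N2]
                     @ replicate (m - 2) {zm}) \<inter> (UNIV - Q) \<noteq> {}"
  shows "hlift f ([N1, gset g Is N2] @ replicate (m - 2) {zm}) \<inter> (UNIV - Q) \<noteq> {}"
proof
  assume c: "hlift f ([N1, gset g Is N2] @ replicate (m - 2) {zm}) \<inter> (UNIV - Q) = {}"
  have Q: "subhypermodule m n f g Q" using cp unfolding classical_prime_def by (rule conjunct1)
  have sub: "hlift f ([N1, gset g Is N2] @ replicate (m - 2) {zm}) \<subseteq> Q" using c by blast
  have zN1: "zm \<in> N1" by (rule subm_zm[OF N1])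
  have zN2: "zm \<in> N2" by (rule subm_zm[OF N2])
  have zQ: "zm \<in> Q" by (rule subm_zm[OF Q])
  have ne: "\<forall>I\<in>set Is. I \<noteq> {}"
  proof
    fix I assume "I \<in> set Is"
    hence "hyperideal m n f' g' I" using hI by blast
    hence "sub_hypergroup m f' I" unfolding hyperideal_def by (rule conjunct1)
    thus "I \<noteq> {}" unfolding sub_hypergroup_def by (rule conjunct1)
  qed
  define ts where "ts = map (\<lambda>I. SOME x. x \<in> I) Is"
  have ts: "list_all2 (\<lambda>r A. r \<in> A) ts Is" unfolding ts_def list_all2_conv_all_nth
    using ne by (simp add: some_in_eq)
  have lts: "length ts = n - 1" using ts lI by (simp add: list_all2_lengthD)
  have zG: "zm \<in> gset g Is N2" unfolding gset_iff using ts zN2 act_zm[OF lts] by blast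
  have GQ: "gset g Is N2 \<subseteq> Q"
  proof
    fix y assume y: "y \<in> gset g Is N2"
    have "f (zm # y # replicate (m - 2) zm) \<subseteq> hlift f ([N1, gset g Is N2] @ replicate (m - 2) {zm})"
      using zN1 y unfolding hlift3 subset_iff by blast
    hence "f (zm # y # replicate (m - 2) zm) \<subseteq> Q" using sub by blast
    thus "y \<in> Q" using M.unit2 by simp
  qed
  have N1Q: "N1 \<subseteq> Q"
  proof
    fix x assume x: "x \<in> N1"
    have "f (x # zm # replicate (m - 2) zm) \<subseteq> hlift f ([N1, gset g Is N2] @ replicate (m - 2) {zm})"
      using x zG unfolding hlift3 subset_iff by blast
    hence "f (x # zm # replicate (m - 2) zm) \<subseteq> Q" using sub by blast
    moreover obtain k where "m = Suc (Suc k)" using M.m2 by (metis add_2_eq_Suc le_Suc_ex)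
    hence "zm # replicate (m - 2) zm = replicate (m - 1) zm" by simp
    ultimately show "x \<in> Q" using M.unit by simp
  qed
  obtain i where i: "i < n - 1" "gset g (Is ! i # replicate (n - 2) {one}) N2 \<subseteq> Q"
    using core[OF cp N2 lI GQ] by blast
  have "hlift f ([N1, gset g (Is ! i # replicate (n - 2) {one}) N2] @ replicate (m - 2) {zm}) \<subseteq> Q"
  proof (rule M.hlift_sub)
    show "length ([N1, gset g (Is ! i # replicate (n - 2) {one}) N2] @ replicate (m - 2) {zm}) = m"
      using M.m2 by simp
    show "\<forall>A\<in>set ([N1, gset g (Is ! i # replicate (n - 2) {one}) N2] @ replicate (m - 2) {zm}). A \<subseteq> Q"
      using N1Q i(2) zQ by (simp add: in_set_replicate)
    show "\<forall>xs. length xs = m \<longrightarrow> set xs \<subseteq> Q \<longrightarrow> f xs \<subseteq> Q" using subm_f[OF Q] by blast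
  qed
  thus False using H i by blast
qed

end



context HM begin

lemma mul_fun: "(\<lambda>y. g' ((r # one # replicate (n-2) one)[1 := y])) = mul r"
  unfolding mul_def by (rule ext) simp

lemma mul_img: "length ss = m \<Longrightarrow> mul r ` f' ss = f' (map (mul r) ss)"
  using gdistr[of "r # one # replicate (n-2) one" ss 1] n2 unfolding mul_fun by simp

lemma mul_hinv: "R.hv (mul r s) = mul r (R.hv s)"
proof (rule R.hinv_eq)
  obtain k where k: "m = Suc (Suc k)" using R.m2 by (metis add_2_eq_Suc le_Suc_ex)
  have "zr \<in> f' (s # R.hv s # replicate (m-2) zr)" by (rule R.hinv_in)
  hence "mul r zr \<in> mul r ` f' (s # R.hv s # replicate (m-2) zr)" by blast
  also have "\<dots> = f' (map (mul r) (s # R.hv s # replicate (m-2) zr))" by (rule mul_img) (simp add: k)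
  finally show "zr \<in> f' (mul r s # mul r (R.hv s) # replicate (m - 2) zr)"
    by (simp add: mul_zero map_replicate_const)
qed

lemma PI: "hyperideal m n f' g' (range (mul r))"
  unfolding hyperideal_def
proof (intro conjI allI impI)
  have "R.cl (range (mul r))" unfolding R.cl_def
  proof (intro conjI allI impI ballI)
    show "zr \<in> range (mul r)" using mul_zero by (metis rangeI)
  next
    fix xs :: "'r list" assume l: "length xs = m" and s: "set xs \<subseteq> range (mul r)"
    then obtain ss where ss: "xs = map (mul r) ss" using ex_map_conv[of xs "mul r"] by blast
    have "f' xs = mul r ` f' ss" using ss l mul_img by simp
    thus "f' xs \<subseteq> range (mul r)" by blast
  next
    fix x assume "x \<in> range (mul r)"
    then obtain s where "x = mul r s" by blast
    thus "R.hv x \<in> range (mul r)" using mul_hinv by simp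
  qed
  thus "sub_hypergroup m f' (range (mul r))" by (rule R.cl_sub)
next
  fix xs :: "'r list" and i assume l: "length xs = n" and i: "i < n"
  show "(\<lambda>y. g' (xs[i := y])) ` range (mul r) \<subseteq> range (mul r)"
  proof
    fix w assume "w \<in> (\<lambda>y. g' (xs[i := y])) ` range (mul r)"
    then obtain s where w: "w = g' (xs[i := mul r s])" by blast
    define rest where "rest = take i xs @ drop (Suc i) xs"
    have lr: "length rest = n - 1" using l i unfolding rest_def by simp
    have "g' (xs[i := mul r s]) = g' (mul r s # rest)"
      apply (rule gcomm) using l apply simp
      using i l by (simp add: upd_conv_take_nth_drop rest_def)
    also have "\<dots> = mul (mul r s) (g' (one # rest))" by (rule g_cons[OF lr])
    also have "\<dots> = mul r (mul s (g' (one # rest)))" by (rule mul_assoc)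
    finally show "w \<in> range (mul r)" using w by simp
  qed
qed

lemma prod_zip: "list_all2 (\<lambda>t r. \<exists>s. t = mul r s) ts rs \<Longrightarrow> length rs \<le> n \<Longrightarrow>
   \<exists>u. prod ts = mul (prod rs) u"
proof (induction rule: list_all2_induct)
  case Nil
  show ?case using prod_nil mul_one by metis
next
  case (Cons t ts r rs)
  obtain u where u: "prod ts = mul (prod rs) u" using Cons by auto
  obtain s where s: "t = mul r s" using Cons by blast
  have lts: "length ts < n" "length rs < n" using Cons(2,4) by (auto simp: list_all2_lengthD)
  have "prod (t # ts) = mul (mul r s) (mul (prod rs) u)" using prod_cons[OF lts(1)] u s by simp
  also have "\<dots> = mul (mul r (prod rs)) (mul s u)" by (metis mul_assoc mul_comm)
  also have "\<dots> = mul (prod (r # rs)) (mul s u)" using prod_cons[OF lts(2)] by simp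
  finally show ?case by blast
qed

lemma clUNIV: "M.cl UNIV" unfolding M.cl_def by simp

lemma backward:
  assumes Q: "subhypermodule m n f g Q" and QU: "Q \<noteq> UNIV"
    and H: "\<forall>Is N1 N2. length Is = n - 1 \<longrightarrow> (\<forall>I\<in>set Is. hyperideal m n f' g' I) \<longrightarrow>
       subhypermodule m n f g N1 \<longrightarrow> subhypermodule m n f g N2 \<longrightarrow>
       (\<forall>i<n - 1. hlift f ([N1, gset g (Is ! i # replicate (n - 2) {one}) N2]
                     @ replicate (m - 2) {zm}) \<inter> (UNIV - Q) \<noteq> {}) \<longrightarrow>
       hlift f ([N1, gset g Is N2] @ replicate (m - 2) {zm}) \<inter> (UNIV - Q) \<noteq> {}"
  shows "classical_prime m n f g one Q"
  unfolding classical_prime_def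
proof (intro conjI allI impI)
  show "subhypermodule m n f g Q" by fact
  show "Q \<noteq> UNIV" by fact
  fix rs a assume lrs: "length rs = n - 1" and ga: "g rs a \<subseteq> Q"
  show "\<exists>i<n - 1. g (rs ! i # replicate (n - 2) one) a \<subseteq> Q"
  proof (rule ccontr)
    assume "\<not> ?thesis"
    hence nq: "\<forall>i<n - 1. \<not> act (rs ! i) a \<subseteq> Q" unfolding act_def by blast
    define p where "p = prod rs"
    define N2 where "N2 = col Q UNIV {p}"
    have zQ: "zm \<in> Q" by (rule subm_zm[OF Q])
    have clN: "M.cl N2" unfolding N2_def by (rule col_cl[OF Q clUNIV])
    have aN: "a \<in> N2" using ga act_g[OF lrs] unfolding N2_def col_def p_def by simp
    have N2: "subhypermodule m n f g N2" unfolding subhypermodule_def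
    proof
      show "sub_hypergroup m f N2" by (rule M.cl_sub[OF clN])
      show "gset g (replicate (n - 1) UNIV) N2 \<subseteq> N2"
      proof
        fix y assume "y \<in> gset g (replicate (n - 1) UNIV) N2"
        then obtain rs' x where rs': "list_all2 (\<lambda>r A. r \<in> A) rs' (replicate (n - 1) UNIV)"
          and x: "x \<in> N2" and y: "y \<in> g rs' x" unfolding gset_iff by blast
        have l': "length rs' = n - 1" using rs' by (simp add: list_all2_lengthD)
        define c where "c = prod rs'"
        have yc: "y \<in> act c x" using y act_g[OF l'] c_def by simp
        have "act p y \<subseteq> (\<Union>y\<in>act c x. act p y)" using yc by blast
        also have "\<dots> = act (mul p c) x" by (simp add: act_comp)
        also have "\<dots> = (\<Union>y\<in>act p x. act c y)" by (metis act_comp mul_comm)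
        also have "\<dots> \<subseteq> Q" using x subm_act[OF Q] unfolding N2_def col_def by blast
        finally show "y \<in> N2" unfolding N2_def col_def by simp
      qed
    qed
    define Is where "Is = map (\<lambda>r. range (mul r)) rs"
    have lI: "length Is = n - 1" using lrs Is_def by simp
    have hI: "\<forall>I\<in>set Is. hyperideal m n f' g' I" unfolding Is_def using PI by auto
    have Hi: "\<forall>i<n - 1. hlift f ([Q, gset g (Is ! i # replicate (n - 2) {one}) N2]
                     @ replicate (m - 2) {zm}) \<inter> (UNIV - Q) \<noteq> {}"
    proof (intro allI impI)
      fix i assume i: "i < n - 1"
      obtain y where y: "y \<in> act (rs ! i) a" "y \<notin> Q" using nq i by blast
      have "y \<in> act (mul (rs ! i) one) a" using y mul_one mul_comm by metis
      hence yG: "y \<in> gset g (Is ! i # replicate (n - 2) {one}) N2"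
        unfolding gset1 act_def Is_def using i lrs aN by auto
      have "f (zm # y # replicate (m - 2) zm) = {y}" by (rule M.unit2)
      hence "y \<in> hlift f ([Q, gset g (Is ! i # replicate (n - 2) {one}) N2] @ replicate (m - 2) {zm})"
        unfolding hlift3 using zQ yG by blast
      thus "hlift f ([Q, gset g (Is ! i # replicate (n - 2) {one}) N2]
                     @ replicate (m - 2) {zm}) \<inter> (UNIV - Q) \<noteq> {}" using y by blast
    qed
    have C: "hlift f ([Q, gset g Is N2] @ replicate (m - 2) {zm}) \<inter> (UNIV - Q) \<noteq> {}"
      using H lI hI Q N2 Hi by blast
    have GQ: "gset g Is N2 \<subseteq> Q"
    proof
      fix w assume "w \<in> gset g Is N2"
      then obtain ts x where ts: "list_all2 (\<lambda>r A. r \<in> A) ts Is" and x: "x \<in> N2" and w: "w \<in> g ts x"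
        unfolding gset_iff by blast
      have lts: "length ts = n - 1" using ts lI by (simp add: list_all2_lengthD)
      have "list_all2 (\<lambda>t r. \<exists>s. t = mul r s) ts rs"
        using ts unfolding Is_def list_all2_conv_all_nth by (auto simp: image_iff)
      then obtain u where u: "prod ts = mul p u" using prod_zip lrs p_def by fastforce
      have "w \<in> act (mul u p) x" using w act_g[OF lts] u mul_comm by simp
      hence "w \<in> (\<Union>y\<in>act p x. act u y)" by (simp add: act_comp)
      thus "w \<in> Q" using x subm_act[OF Q] unfolding N2_def col_def by blast
    qed
    have "hlift f ([Q, gset g Is N2] @ replicate (m - 2) {zm}) \<subseteq> Q"
    proof (rule M.hlift_sub)
      show "length ([Q, gset g Is N2] @ replicate (m - 2) {zm}) = m" using M.m2 by simp
      show "\<forall>A\<in>set ([Q, gset g Is N2] @ replicate (m - 2) {zm}). A \<subseteq> Q"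
        using GQ zQ by (simp add: in_set_replicate)
      show "\<forall>xs. length xs = m \<longrightarrow> set xs \<subseteq> Q \<longrightarrow> f xs \<subseteq> Q" using subm_f[OF Q] by blast
    qed
    thus False using C by blast
  qed
qed

end


theorem mainTheorem1:
  fixes f' :: "'r list \<Rightarrow> 'r set" and g' :: "'r list \<Rightarrow> 'r" and zr one :: 'r
    and f :: "'m list \<Rightarrow> 'm set" and g :: "'r list \<Rightarrow> 'm \<Rightarrow> 'm set" and zm :: 'm
    and m n :: nat and Q :: "'m set"
  assumes "hypermodule m n f' g' zr one f g zm"
    and "subhypermodule m n f g Q" and "Q \<noteq> UNIV"
  shows "classical_prime m n f g one Q \<longleftrightarrow>
    (\<forall>Is N1 N2. length Is = n - 1 \<longrightarrow> (\<forall>I\<in>set Is. hyperideal m n f' g' I) \<longrightarrow>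
       subhypermodule m n f g N1 \<longrightarrow> subhypermodule m n f g N2 \<longrightarrow>
       (\<forall>i<n - 1. hlift f ([N1, gset g (Is ! i # replicate (n - 2) {one}) N2]
                     @ replicate (m - 2) {zm}) \<inter> (UNIV - Q) \<noteq> {}) \<longrightarrow>
       hlift f ([N1, gset g Is N2] @ replicate (m - 2) {zm}) \<inter> (UNIV - Q) \<noteq> {})"
proof -
  interpret HM m n f' g' zr one f g zm by (rule HM.intro) (rule assms(1))
  show ?thesis
  proof
    assume cp: "classical_prime m n f g one Q"
    show "\<forall>Is N1 N2. length Is = n - 1 \<longrightarrow> (\<forall>I\<in>set Is. hyperideal m n f' g' I) \<longrightarrow>
       subhypermodule m n f g N1 \<longrightarrow> subhypermodule m n f g N2 \<longrightarrow>
       (\<forall>i<n - 1. hlift f ([N1, gset g (Is ! i # replicate (n - 2) {one}) N2]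
                     @ replicate (m - 2) {zm}) \<inter> (UNIV - Q) \<noteq> {}) \<longrightarrow>
       hlift f ([N1, gset g Is N2] @ replicate (m - 2) {zm}) \<inter> (UNIV - Q) \<noteq> {}"
      using forward[OF cp] by blast
  next
    assume H: "\<forall>Is N1 N2. length Is = n - 1 \<longrightarrow> (\<forall>I\<in>set Is. hyperideal m n f' g' I) \<longrightarrow>
       subhypermodule m n f g N1 \<longrightarrow> subhypermodule m n f g N2 \<longrightarrow>
       (\<forall>i<n - 1. hlift f ([N1, gset g (Is ! i # replicate (n - 2) {one}) N2]
                     @ replicate (m - 2) {zm}) \<inter> (UNIV - Q) \<noteq> {}) \<longrightarrow>
       hlift f ([N1, gset g Is N2] @ replicate (m - 2) {zm}) \<inter> (UNIV - Q) \<noteq> {}"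
    show "classical_prime m n f g one Q" by (rule backward[OF assms(2,3) H])
  qed
qed

end
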